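(* Each of the sets $A$, $\wp_{fs}(A)$, $\wp_{fin}(A)$, $\wp_{cofin}(A)$, $T_{fin}(A)$, $A^A_{fs}$ and $\wp_{fin}(\wp_{fs}(A))$ is infinite but not FSM Dedekind infinite; moreover no finitely supported subset of any of these sets is FSM Dedekind infinite.
   Context: Framework (FSM). Work in ZF with a fixed infinite set $A$ of atoms; $S_A$ is the group of bijections of $A$ fixing all but finitely many atoms, acting on $A$ by evaluation; $Fix(S)$ is the set of $\pi\in S_A$ fixing each element of $S\subseteq A$; $S$ supports $x$ if $\pi\cdot x=x$ for all $\pi\in Fix(S)$. Subsets carry $\pi\star Z=\{\pi\cdot z:z\in Z\}$. $\wp_{fs}(A)$: finitely supported subsets of $A$; $\wp_{fin}(\cdot)$: finite subsets; $\wp_{cofin}(A)$: cofinite subsets of $A$. $T_{fin}(A)$: finite injective tuples of atoms (including the empty tuple) with componentwise action. $A^A_{fs}$: finitely supported functions $A\to A$, with action $(\pi\cdot f)(a)=\pi(f(\pi^{-1}(a)))$; a function is finitely supported if there is a finite $S$ with $f(\pi\cdot x)=\pi\cdot f(x)$ for all $\pi\in Fix(S)$. "Infinite" means not in bijection with any natural number. A set $X$ is FSM Dedekind infinite if there is a finitely supported injection from $X$ onto a finitely supported proper subset of $X$. *)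

theory Defs
  imports Main
begin

text \<open>Finitely supported mathematics. Atoms are the elements of a type 'a
(assumed infinite in the theorem); the set of atoms A is UNIV.\<close>

definition fperm :: "('a \<Rightarrow> 'a) \<Rightarrow> bool" where
  "fperm \<pi> \<longleftrightarrow> bij \<pi> \<and> finite {a. \<pi> a \<noteq> a}"

definition Fix :: "'a set \<Rightarrow> ('a \<Rightarrow> 'a) set" where
  "Fix S = {\<pi>. fperm \<pi> \<and> (\<forall>a\<in>S. \<pi> a = a)}"

definition supports :: "(('a \<Rightarrow> 'a) \<Rightarrow> 'b \<Rightarrow> 'b) \<Rightarrow> 'a set \<Rightarrow> 'b \<Rightarrow> bool" where
  "supports act S x \<longleftrightarrow> (\<forall>\<pi>\<in>Fix S. act \<pi> x = x)"

definition fin_supp :: "(('a \<Rightarrow> 'a) \<Rightarrow> 'b \<Rightarrow> 'b) \<Rightarrow> 'b \<Rightarrow> bool" where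
  "fin_supp act x \<longleftrightarrow> (\<exists>S. finite S \<and> supports act S x)"

definition atom_act :: "('a \<Rightarrow> 'a) \<Rightarrow> 'a \<Rightarrow> 'a" where
  "atom_act \<pi> a = \<pi> a"

definition set_act :: "(('a \<Rightarrow> 'a) \<Rightarrow> 'b \<Rightarrow> 'b) \<Rightarrow> ('a \<Rightarrow> 'a) \<Rightarrow> 'b set \<Rightarrow> 'b set" where
  "set_act act \<pi> Z = act \<pi> ` Z"

definition pair_act :: "(('a \<Rightarrow> 'a) \<Rightarrow> 'b \<Rightarrow> 'b) \<Rightarrow> (('a \<Rightarrow> 'a) \<Rightarrow> 'c \<Rightarrow> 'c)
    \<Rightarrow> ('a \<Rightarrow> 'a) \<Rightarrow> 'b \<times> 'c \<Rightarrow> 'b \<times> 'c" where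
  "pair_act act1 act2 \<pi> p = (act1 \<pi> (fst p), act2 \<pi> (snd p))"

definition tuple_act :: "('a \<Rightarrow> 'a) \<Rightarrow> 'a list \<Rightarrow> 'a list" where
  "tuple_act \<pi> xs = map \<pi> xs"

definition fun_act :: "('a \<Rightarrow> 'a) \<Rightarrow> ('a \<Rightarrow> 'a) \<Rightarrow> ('a \<Rightarrow> 'a)" where
  "fun_act \<pi> f = (\<lambda>a. \<pi> (f (inv \<pi> a)))"

definition fs_set :: "(('a \<Rightarrow> 'a) \<Rightarrow> 'b \<Rightarrow> 'b) \<Rightarrow> 'b set \<Rightarrow> bool" where
  "fs_set act X \<longleftrightarrow> fin_supp (set_act act) X"

definition graph_on :: "('b \<Rightarrow> 'c) \<Rightarrow> 'b set \<Rightarrow> ('b \<times> 'c) set" where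
  "graph_on f X = {(x, f x) | x. x \<in> X}"

definition fs_fun :: "(('a \<Rightarrow> 'a) \<Rightarrow> 'b \<Rightarrow> 'b) \<Rightarrow> (('a \<Rightarrow> 'a) \<Rightarrow> 'c \<Rightarrow> 'c)
    \<Rightarrow> 'b set \<Rightarrow> ('b \<Rightarrow> 'c) \<Rightarrow> bool" where
  "fs_fun act1 act2 X f \<longleftrightarrow> fin_supp (set_act (pair_act act1 act2)) (graph_on f X)"

definition FSM_Dedekind_infinite :: "(('a \<Rightarrow> 'a) \<Rightarrow> 'b \<Rightarrow> 'b) \<Rightarrow> 'b set \<Rightarrow> bool" where
  "FSM_Dedekind_infinite act X \<longleftrightarrow>
     (\<exists>f Y. fs_set act Y \<and> Y \<subset> X \<and> fs_fun act act X f \<and> inj_on f X \<and> f ` X = Y)"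

definition FSM_inf_not_DI :: "(('a \<Rightarrow> 'a) \<Rightarrow> 'b \<Rightarrow> 'b) \<Rightarrow> 'b set \<Rightarrow> bool" where
  "FSM_inf_not_DI act X \<longleftrightarrow> infinite X \<and> \<not> FSM_Dedekind_infinite act X \<and>
     (\<forall>Y. Y \<subseteq> X \<and> fs_set act Y \<longrightarrow> \<not> FSM_Dedekind_infinite act Y)"

definition Pfs :: "'a set set" where
  "Pfs = {Z. fs_set atom_act Z}"

definition Pfin :: "'a set set" where
  "Pfin = {Z. finite Z}"

definition Pcofin :: "'a set set" where
  "Pcofin = {Z. finite (- Z)}"

definition Tfin :: "'a list set" where
  "Tfin = {xs. distinct xs}"

definition AA_fs :: "('a \<Rightarrow> 'a) set" where
  "AA_fs = {f. \<exists>S. finite S \<and> (\<forall>\<pi>\<in>Fix S. \<forall>x. f (\<pi> x) = \<pi> (f x))}"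

definition Pfin_Pfs :: "'a set set set" where
  "Pfin_Pfs = {F. finite F \<and> F \<subseteq> Pfs}"

end

theory Submission
  imports Defs "HOL-Library.FuncSet"
begin

definition sw :: "'a \<Rightarrow> 'a \<Rightarrow> 'a \<Rightarrow> 'a" where
  "sw a b x = (if x = a then b else if x = b then a else x)"

lemma sw_inv[simp]: "sw a b (sw a b x) = x" by (simp add: sw_def)

lemma sw_bij: "bij (sw a b)"
  by (rule o_bij[of "sw a b"]) (auto simp: fun_eq_iff)

lemma sw_Fix: "a \<notin> T \<Longrightarrow> b \<notin> T \<Longrightarrow> sw a b \<in> Fix T"
proof -
  assume "a \<notin> T" "b \<notin> T"
  have "{x. sw a b x \<noteq> x} \<subseteq> {a,b}" by (auto simp: sw_def)
  hence "finite {x. sw a b x \<noteq> x}" by (rule finite_subset) simp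
  thus ?thesis using sw_bij \<open>a \<notin> T\<close> \<open>b \<notin> T\<close> unfolding Fix_def fperm_def
    by (auto simp: sw_def)
qed

lemma sw_a[simp]: "sw a b a = b" by (simp add: sw_def)

lemma fresh:
  assumes "infinite (UNIV::'a set)" "finite (T::'a set)"
  obtains b where "b \<notin> T"
proof -
  have "UNIV \<noteq> T" using assms by auto
  thus ?thesis using that by auto
qed

lemma Fix_mono: "T \<subseteq> T' \<Longrightarrow> Fix T' \<subseteq> Fix T" by (auto simp: Fix_def)

lemma supports_mono: "supports act T x \<Longrightarrow> T \<subseteq> T' \<Longrightarrow> supports act T' x"
  unfolding supports_def using Fix_mono by blast

lemma atom_act_eq[simp]: "atom_act \<pi> = \<pi>" by (rule ext) (simp add: atom_act_def)

lemma set_atom_act_eq[simp]: "set_act atom_act \<pi> = (\<lambda>Z. \<pi> ` Z)"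
  by (rule ext) (simp add: set_act_def)

lemma orbit_in:
  assumes S: "supports (set_act (pair_act act act)) S (graph_on f Y)" and fY: "f ` Y \<subseteq> Y"
    and x: "x \<in> Y" "supports act T x" and ST: "S \<subseteq> T"
  shows "f x \<in> Y \<and> supports act T (f x)"
proof -
  have "f x \<in> Y" using fY x by auto
  moreover have "supports act T (f x)" unfolding supports_def
  proof
    fix \<pi> assume p: "\<pi> \<in> Fix T"
    hence pS: "\<pi> \<in> Fix S" using Fix_mono ST by blast
    have "(x, f x) \<in> graph_on f Y" using x by (auto simp: graph_on_def)
    hence "pair_act act act \<pi> (x, f x) \<in> graph_on f Y" using S pS unfolding supports_def set_act_def
      by (metis imageI)
    hence "(act \<pi> x, act \<pi> (f x)) \<in> graph_on f Y" by (simp add: pair_act_def)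
    moreover have "act \<pi> x = x" using x(2) p by (simp add: supports_def)
    ultimately show "act \<pi> (f x) = f x" by (auto simp: graph_on_def)
  qed
  ultimately show ?thesis by simp
qed

lemma no_DI:
  assumes fs: "\<And>x. x \<in> X \<Longrightarrow> fin_supp act x"
    and fin: "\<And>T. finite T \<Longrightarrow> finite {x\<in>X. supports act T x}"
    and YX: "Y \<subseteq> X"
  shows "\<not> FSM_Dedekind_infinite act Y"
proof
  assume "FSM_Dedekind_infinite act Y"
  then obtain f Z where Z: "Z \<subset> Y" and ffs: "fs_fun act act Y f" and inj: "inj_on f Y"
    and fY: "f ` Y = Z"
    unfolding FSM_Dedekind_infinite_def by blast
  obtain S where S: "finite S" "supports (set_act (pair_act act act)) S (graph_on f Y)"
    using ffs unfolding fs_fun_def fin_supp_def by blast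
  obtain y where y: "y \<in> Y" "y \<notin> Z" using Z by blast
  obtain Ty where Ty: "finite Ty" "supports act Ty y" using fs[of y] y YX unfolding fin_supp_def by blast
  define T where "T = S \<union> Ty"
  have fY': "f ` Y \<subseteq> Y" using fY Z by blast
  have orb: "(f^^n) y \<in> Y \<and> supports act T ((f^^n) y)" for n
  proof (induction n)
    case 0 show ?case using y Ty(2) supports_mono[of act Ty y T] T_def by auto
  next
    case (Suc n) then show ?case using orbit_in[OF S(2) fY', of "(f^^n) y" T] T_def by auto
  qed
  have neq: "\<forall>m. n < m \<longrightarrow> (f^^n) y \<noteq> (f^^m) y" for n
  proof (induction n)
    case 0
    show ?case
    proof (intro allI impI)
      fix m :: nat assume "0 < m"
      then obtain k where m: "m = Suc k" by (cases m) auto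
      have "(f^^m) y = f ((f^^k) y)" using m by simp
      also have "\<dots> \<in> Z" using orb[of k] fY by auto
      finally show "(f^^0) y \<noteq> (f^^m) y" using y by auto
    qed
  next
    case (Suc n)
    show ?case
    proof (intro allI impI)
      fix m :: nat assume "Suc n < m"
      then obtain k where m: "m = Suc k" and nk: "n < k" by (cases m) auto
      show "(f^^Suc n) y \<noteq> (f^^m) y"
      proof
        assume "(f^^Suc n) y = (f^^m) y"
        hence "f ((f^^n) y) = f ((f^^k) y)" using m by simp
        hence "(f^^n) y = (f^^k) y" using inj orb[of n] orb[of k] by (auto dest: inj_onD)
        thus False using Suc.IH nk by auto
      qed
    qed
  qed
  have "inj (\<lambda>n. (f^^n) y)"
    by (rule injI) (metis neq linorder_neqE_nat)
  hence "infinite (range (\<lambda>n. (f^^n) y))" using finite_imageD infinite_UNIV_nat by blast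
  moreover have "range (\<lambda>n. (f^^n) y) \<subseteq> {x\<in>X. supports act T x}" using orb YX by auto
  moreover have "finite T" using S(1) Ty(1) T_def by auto
  ultimately show False using fin finite_subset by blast
qed

lemma generic:
  assumes "infinite X" "\<And>x. x\<in>X \<Longrightarrow> fin_supp act x"
    "\<And>T. finite T \<Longrightarrow> finite {x\<in>X. supports act T x}"
  shows "FSM_inf_not_DI act X"
  using assms no_DI[of X act] unfolding FSM_inf_not_DI_def by blast

section \<open>Atoms\<close>

lemma atom_supp:
  assumes inf: "infinite (UNIV::'a set)" and T: "finite T" and s: "supports atom_act T (a::'a)"
  shows "a \<in> T"
proof (rule ccontr)
  assume aT: "a \<notin> T"
  obtain b where b: "b \<notin> insert a T" using fresh[OF inf, of "insert a T"] T by auto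
  have "sw a b \<in> Fix T" using b aT by (auto intro: sw_Fix)
  hence "sw a b a = a" using s by (auto simp: supports_def)
  thus False using b by auto
qed

lemma atoms_ok:
  assumes inf: "infinite (UNIV::'a set)"
  shows "FSM_inf_not_DI atom_act (UNIV :: 'a set)"
proof (rule generic)
  show "infinite (UNIV::'a set)" by (rule inf)
  fix x :: 'a
  show "fin_supp atom_act x" unfolding fin_supp_def supports_def
    by (rule exI[of _ "{x}"]) (auto simp: Fix_def)
next
  fix T :: "'a set" assume "finite T"
  hence "{x \<in> UNIV. supports atom_act T x} \<subseteq> T" using atom_supp[OF inf] by auto
  thus "finite {x \<in> UNIV. supports atom_act T x}" using \<open>finite T\<close> finite_subset by blast
qed

section \<open>Subsets\<close>

lemma set_supp:
  assumes s: "supports (set_act atom_act) T Z"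
  shows "Z \<subseteq> T \<or> - Z \<subseteq> T"
proof (rule ccontr)
  assume "\<not> (Z \<subseteq> T \<or> - Z \<subseteq> T)"
  then obtain a b where ab: "a \<in> Z" "a \<notin> T" "b \<notin> Z" "b \<notin> T" by auto
  have "sw a b \<in> Fix T" using ab by (intro sw_Fix)
  hence "sw a b ` Z = Z" using s by (simp add: supports_def)
  hence "sw a b a \<in> Z" using ab by blast
  thus False using ab by simp
qed

lemma finite_or_cofinite_supp:
  "finite T \<Longrightarrow> finite {Z. Z \<subseteq> T \<or> - Z \<subseteq> T}"
proof -
  assume "finite T"
  have "{Z. Z \<subseteq> T \<or> - Z \<subseteq> T} \<subseteq> Pow T \<union> uminus ` Pow T"
  proof
    fix Z assume "Z \<in> {Z. Z \<subseteq> T \<or> - Z \<subseteq> T}"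
    hence "Z \<in> Pow T \<or> - Z \<in> Pow T" by auto
    moreover have "Z = uminus (- Z)" by simp
    ultimately show "Z \<in> Pow T \<union> uminus ` Pow T"
      by (metis UnI1 UnI2 imageI)
  qed
  thus ?thesis by (rule finite_subset) (simp add: \<open>finite T\<close>)
qed

lemma Pfs_fin:
  "finite T \<Longrightarrow> finite {x \<in> Pfs. supports (set_act atom_act) T x}"
proof -
  assume T: "finite T"
  have "{x \<in> Pfs. supports (set_act atom_act) T x} \<subseteq> {Z. Z \<subseteq> T \<or> - Z \<subseteq> T}"
    using set_supp by blast
  thus ?thesis by (rule finite_subset) (rule finite_or_cofinite_supp[OF T])
qed

lemma Pfin_sub: "Pfin \<subseteq> Pfs"
proof
  fix Z :: "'a set" assume "Z \<in> Pfin"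
  hence "finite Z" by (simp add: Pfin_def)
  moreover have "supports (set_act atom_act) Z Z"
    unfolding supports_def by (auto simp: Fix_def intro: rev_image_eqI)
  ultimately show "Z \<in> Pfs" by (auto simp: Pfs_def fs_set_def fin_supp_def)
qed

lemma Pcofin_sub: "Pcofin \<subseteq> Pfs"
proof
  fix Z :: "'a set" assume "Z \<in> Pcofin"
  hence "finite (- Z)" by (simp add: Pcofin_def)
  moreover have "supports (set_act atom_act) (- Z) Z"
    unfolding supports_def
  proof
    fix \<pi> assume p: "\<pi> \<in> Fix (- Z)"
    hence "\<pi> ` (- Z) = - Z" by (auto simp: Fix_def intro: rev_image_eqI)
    moreover have "bij \<pi>" using p by (simp add: Fix_def fperm_def)
    ultimately have "- (\<pi> ` Z) = - Z" by (simp add: bij_image_Compl_eq)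
    thus "set_act atom_act \<pi> Z = Z" by simp
  qed
  ultimately show "Z \<in> Pfs" by (auto simp: Pfs_def fs_set_def fin_supp_def)
qed

lemma inf_image:
  assumes "infinite (UNIV::'a set)" "inj (f :: 'a \<Rightarrow> 'b)" "range f \<subseteq> X"
  shows "infinite X"
proof
  assume "finite X"
  hence "finite (range f)" using assms(3) by (rule finite_subset[rotated])
  hence "finite (UNIV::'a set)" using assms(2) by (rule finite_imageD)
  thus False using assms(1) by simp
qed

lemma fin_mono: "X \<subseteq> X' \<Longrightarrow> finite {x\<in>X'. P x} \<Longrightarrow> finite {x\<in>X. P x}"
  by (erule finite_subset[rotated]) blast

lemma Pfs_ok:
  assumes inf: "infinite (UNIV::'a set)"
  shows "FSM_inf_not_DI (set_act atom_act) (Pfs :: 'a set set)"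
   and "FSM_inf_not_DI (set_act atom_act) (Pfin :: 'a set set)"
   and "FSM_inf_not_DI (set_act atom_act) (Pcofin :: 'a set set)"
proof -
  have i1: "infinite (Pfin :: 'a set set)"
    by (rule inf_image[OF inf, of "\<lambda>a. {a}"]) (auto simp: Pfin_def inj_def)
  have i2: "infinite (Pcofin :: 'a set set)"
    by (rule inf_image[OF inf, of "\<lambda>a. - {a}"]) (auto simp: Pcofin_def inj_def)
  have i0: "infinite (Pfs :: 'a set set)"
    using i1 Pfin_sub by (metis finite_subset)
  have fs: "fin_supp (set_act atom_act) x" if "x \<in> Pfs" for x :: "'a set"
    using that by (simp add: Pfs_def fs_set_def)
  show "FSM_inf_not_DI (set_act atom_act) (Pfs :: 'a set set)"
    by (rule generic[OF i0 fs Pfs_fin])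
  show "FSM_inf_not_DI (set_act atom_act) (Pfin :: 'a set set)"
    by (rule generic[OF i1 fs fin_mono[OF Pfin_sub Pfs_fin]]) (use Pfin_sub in blast)+
  show "FSM_inf_not_DI (set_act atom_act) (Pcofin :: 'a set set)"
    by (rule generic[OF i2 fs fin_mono[OF Pcofin_sub Pfs_fin]]) (use Pcofin_sub in blast)+
qed

section \<open>Tuples\<close>

lemma tuple_supp:
  assumes inf: "infinite (UNIV::'a set)" and T: "finite T"
    and s: "supports tuple_act T (xs::'a list)"
  shows "set xs \<subseteq> T"
proof
  fix a assume a: "a \<in> set xs"
  show "a \<in> T"
  proof (rule ccontr)
    assume aT: "a \<notin> T"
    obtain b where b: "b \<notin> insert a (T \<union> set xs)"
      using fresh[OF inf, of "insert a (T \<union> set xs)"] T by auto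
    have "sw a b \<in> Fix T" using b aT by (auto intro: sw_Fix)
    hence "map (sw a b) xs = xs" using s by (simp add: supports_def tuple_act_def)
    hence "sw a b a \<in> set xs" using a by (metis list.set_map imageI)
    thus False using b by simp
  qed
qed

lemma Tfin_ok:
  assumes inf: "infinite (UNIV::'a set)"
  shows "FSM_inf_not_DI tuple_act (Tfin :: 'a list set)"
proof (rule generic)
  show "infinite (Tfin :: 'a list set)"
    by (rule inf_image[OF inf, of "\<lambda>a. [a]"]) (auto simp: Tfin_def inj_def)
next
  fix xs :: "'a list"
  have "supports tuple_act (set xs) xs"
    unfolding supports_def tuple_act_def by (auto simp: Fix_def intro: map_idI)
  thus "fin_supp tuple_act xs" unfolding fin_supp_def by blast
next
  fix T :: "'a set" assume T: "finite T"
  have "{x \<in> Tfin. supports tuple_act T x} \<subseteq> {xs. set xs \<subseteq> T \<and> length xs \<le> card T}"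
  proof
    fix xs assume xs: "xs \<in> {x \<in> Tfin. supports tuple_act T x}"
    hence st: "set xs \<subseteq> T" using tuple_supp[OF inf T] by blast
    have "distinct xs" using xs by (simp add: Tfin_def)
    hence "length xs = card (set xs)" by (simp add: distinct_card)
    also have "\<dots> \<le> card T" using st T by (rule card_mono[rotated])
    finally show "xs \<in> {xs. set xs \<subseteq> T \<and> length xs \<le> card T}" using st by simp
  qed
  thus "finite {x \<in> Tfin. supports tuple_act T x}"
    by (rule finite_subset) (rule finite_lists_length_le[OF T])
qed

section \<open>Functions\<close>

lemma fun_comm:
  assumes s: "supports fun_act T f" and p: "\<pi> \<in> Fix T"
  shows "f (\<pi> x) = \<pi> (f x)"
proof -
  have "fun_act \<pi> f = f" using s p by (simp add: supports_def)
  hence "f (\<pi> x) = \<pi> (f (inv \<pi> (\<pi> x)))" unfolding fun_act_def by (metis)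
  moreover have "bij \<pi>" using p by (simp add: Fix_def fperm_def)
  ultimately show ?thesis by (simp add: bij_is_inj)
qed

lemma fun_val:
  assumes inf: "infinite (UNIV::'a set)" and T: "finite T" and s: "supports fun_act T (f::'a\<Rightarrow>'a)"
  shows "f x \<in> insert x T"
proof (rule ccontr)
  assume h: "f x \<notin> insert x T"
  obtain b where b: "b \<notin> insert x (insert (f x) T)"
    using fresh[OF inf, of "insert x (insert (f x) T)"] T by auto
  have p: "sw (f x) b \<in> Fix T" using b h by (auto intro: sw_Fix)
  have "f (sw (f x) b x) = sw (f x) b (f x)" by (rule fun_comm[OF s p])
  moreover have "sw (f x) b x = x" using b h by (auto simp: sw_def)
  ultimately have "f x = b" by simp
  thus False using b by simp
qed

lemma fun_outside:
  assumes inf: "infinite (UNIV::'a set)" and T: "finite T" and s: "supports fun_act T (f::'a\<Rightarrow>'a)"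
    and x0: "x0 \<notin> T" and x: "x \<notin> T"
  shows "f x = (if f x0 = x0 then x else f x0)"
proof (cases "x = x0")
  case True thus ?thesis by simp
next
  case False
  have p: "sw x0 x \<in> Fix T" using x0 x by (rule sw_Fix)
  have e: "f x = sw x0 x (f x0)" using fun_comm[OF s p, of x0] by simp
  show ?thesis
  proof (cases "f x0 = x0")
    case True thus ?thesis using e by simp
  next
    case False
    hence "f x0 \<in> T" using fun_val[OF inf T s, of x0] by simp
    hence "f x0 \<noteq> x0" "f x0 \<noteq> x" using x0 x by auto
    thus ?thesis using e by (simp add: sw_def)
  qed
qed

lemma AA_ok:
  assumes inf: "infinite (UNIV::'a set)"
  shows "FSM_inf_not_DI fun_act (AA_fs :: ('a \<Rightarrow> 'a) set)"
proof (rule generic)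
  show "infinite (AA_fs :: ('a \<Rightarrow> 'a) set)"
  proof (rule inf_image[OF inf, of "\<lambda>a. (\<lambda>_. a)"])
    show "inj (\<lambda>a::'a. (\<lambda>_::'a. a))" by (auto simp: inj_def fun_eq_iff)
    show "range (\<lambda>a::'a. (\<lambda>_::'a. a)) \<subseteq> AA_fs"
    proof
      fix g assume "g \<in> range (\<lambda>a::'a. (\<lambda>_::'a. a))"
      then obtain a where g: "g = (\<lambda>_. a)" by blast
      have "\<forall>\<pi>\<in>Fix {a}. \<forall>x. g (\<pi> x) = \<pi> (g x)" by (auto simp: g Fix_def)
      thus "g \<in> AA_fs" unfolding AA_fs_def by blast
    qed
  qed
next
  fix f :: "'a \<Rightarrow> 'a" assume "f \<in> AA_fs"
  then obtain S where S: "finite S" "\<forall>\<pi>\<in>Fix S. \<forall>x. f (\<pi> x) = \<pi> (f x)"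
    unfolding AA_fs_def by blast
  have "supports fun_act S f" unfolding supports_def
  proof
    fix \<pi> assume p: "\<pi> \<in> Fix S"
    hence b: "bij \<pi>" by (simp add: Fix_def fperm_def)
    show "fun_act \<pi> f = f"
    proof (rule ext)
      fix a
      have "\<pi> (f (inv \<pi> a)) = f (\<pi> (inv \<pi> a))" using S(2) p by simp
      also have "\<dots> = f a" using b by (simp add: bij_is_surj surj_f_inv_f)
      finally show "fun_act \<pi> f a = f a" by (simp add: fun_act_def)
    qed
  qed
  thus "fin_supp fun_act f" using S(1) unfolding fin_supp_def by blast
next
  fix T :: "'a set" assume T: "finite T"
  obtain x0 where x0: "x0 \<notin> T" using fresh[OF inf T] by blast
  let ?Sup = "{x \<in> AA_fs. supports fun_act T x}"
  let ?I = "insert x0 T"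
  have inj: "inj_on (\<lambda>f. restrict f ?I) ?Sup"
  proof (rule inj_onI)
    fix f g assume f: "f \<in> ?Sup" and g: "g \<in> ?Sup" and eq: "restrict f ?I = restrict g ?I"
    have agree: "f y = g y" if "y \<in> ?I" for y
      using fun_cong[OF eq, of y] that by simp
    show "f = g"
    proof (rule ext)
      fix y show "f y = g y"
      proof (cases "y \<in> T")
        case True thus ?thesis using agree by simp
      next
        case False
        have "f y = (if f x0 = x0 then y else f x0)"
          using fun_outside[OF inf T _ x0 False, of f] f by simp
        moreover have "g y = (if g x0 = x0 then y else g x0)"
          using fun_outside[OF inf T _ x0 False, of g] g by simp
        ultimately show ?thesis using agree[of x0] by simp
      qed
    qed
  qed
  have sub: "(\<lambda>f. restrict f ?I) ` ?Sup \<subseteq> (\<Pi>\<^sub>E i \<in> ?I. ?I)"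
  proof
    fix h assume "h \<in> (\<lambda>f. restrict f ?I) ` ?Sup"
    then obtain f where f: "f \<in> ?Sup" and h: "h = restrict f ?I" by blast
    have "f y \<in> ?I" if "y \<in> ?I" for y
      using fun_val[OF inf T _, of f y] f that by auto
    thus "h \<in> (\<Pi>\<^sub>E i \<in> ?I. ?I)" using h by auto
  qed
  have "finite (\<Pi>\<^sub>E i \<in> ?I. ?I)" using T by (intro finite_PiE) auto
  hence "finite ((\<lambda>f. restrict f ?I) ` ?Sup)" using sub by (rule finite_subset[rotated])
  thus "finite ?Sup" using inj by (rule finite_imageD)
qed

section \<open>Finite sets of finitely supported subsets\<close>

definition small :: "'a set \<Rightarrow> 'a set" where
  "small Z = (if finite Z then Z else - Z)"

lemma small_bij: "bij \<pi> \<Longrightarrow> small (\<pi> ` Z) = \<pi> ` small Z"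
proof -
  assume b: "bij \<pi>"
  have "finite (\<pi> ` Z) = finite Z" using b by (meson bij_is_inj finite_image_iff inj_on_subset subset_UNIV)
  thus ?thesis using b by (simp add: small_def bij_image_Compl_eq)
qed

lemma Pfs_small: "Z \<in> Pfs \<Longrightarrow> finite (small Z)"
proof -
  assume "Z \<in> Pfs"
  then obtain S where S: "finite S" "supports (set_act atom_act) S Z"
    by (auto simp: Pfs_def fs_set_def fin_supp_def)
  have "Z \<subseteq> S \<or> - Z \<subseteq> S" using set_supp[OF S(2)] .
  thus ?thesis
  proof
    assume "Z \<subseteq> S" hence "finite Z" using S(1) by (rule finite_subset)
    thus ?thesis by (simp add: small_def)
  next
    assume h: "- Z \<subseteq> S"
    hence "finite (- Z)" using S(1) by (rule finite_subset)
    thus ?thesis by (simp add: small_def)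
  qed
qed

lemma small_cases: "small Z \<subseteq> T \<Longrightarrow> Z \<subseteq> T \<or> - Z \<subseteq> T"
  by (auto simp: small_def split: if_splits)

lemma PP_supp:
  assumes inf: "infinite (UNIV::'a set)" and T: "finite T"
    and F: "F \<in> Pfin_Pfs" and s: "supports (set_act (set_act atom_act)) T (F :: 'a set set)"
    and Z: "Z \<in> F"
  shows "small Z \<subseteq> T"
proof
  fix a assume a: "a \<in> small Z"
  show "a \<in> T"
  proof (rule ccontr)
    assume aT: "a \<notin> T"
    have Ffin: "finite F" and FP: "F \<subseteq> Pfs" using F by (auto simp: Pfin_Pfs_def)
    define U where "U = \<Union> (small ` F)"
    have "finite U" unfolding U_def
      by (rule finite_Union) (use Ffin FP Pfs_small in auto)
    then obtain b where b: "b \<notin> insert a (T \<union> U)"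
      using fresh[OF inf, of "insert a (T \<union> U)"] T by auto
    have p: "sw a b \<in> Fix T" using b aT by (auto intro: sw_Fix)
    have inv: "(\<lambda>Z. sw a b ` Z) ` F = F"
    proof -
      have "set_act (set_act atom_act) (sw a b) F = F" using s p unfolding supports_def by blast
      thus ?thesis by (simp only: set_act_def set_atom_act_eq)
    qed
    hence ZF: "sw a b ` Z \<in> F" using Z by blast
    have "b \<in> sw a b ` small Z" using a by (metis sw_a imageI)
    also have "\<dots> = small (sw a b ` Z)" using small_bij[OF sw_bij, of a b Z] by (rule sym)
    finally have "b \<in> U" using ZF unfolding U_def by blast
    thus False using b by simp
  qed
qed

lemma PP_ok:
  assumes inf: "infinite (UNIV::'a set)"
  shows "FSM_inf_not_DI (set_act (set_act atom_act)) (Pfin_Pfs :: 'a set set set)"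
proof (rule generic)
  show "infinite (Pfin_Pfs :: 'a set set set)"
  proof (rule inf_image[OF inf, of "\<lambda>a. {{a}}"])
    show "inj (\<lambda>a::'a. {{a}})" by (auto simp: inj_def)
    show "range (\<lambda>a::'a. {{a}}) \<subseteq> Pfin_Pfs"
    proof
      fix F assume "F \<in> range (\<lambda>a::'a. {{a}})"
      then obtain a :: 'a where F: "F = {{a}}" by blast
      have "{a} \<in> Pfin" by (simp add: Pfin_def)
      hence "{a} \<in> Pfs" using Pfin_sub by blast
      thus "F \<in> Pfin_Pfs" by (simp add: F Pfin_Pfs_def)
    qed
  qed
next
  fix F :: "'a set set" assume F: "F \<in> Pfin_Pfs"
  hence Ffin: "finite F" and FP: "F \<subseteq> Pfs" by (auto simp: Pfin_Pfs_def)
  have "\<forall>Z\<in>F. \<exists>S. finite S \<and> supports (set_act atom_act) S Z"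
    using FP by (auto simp: Pfs_def fs_set_def fin_supp_def)
  then obtain g where g: "\<forall>Z\<in>F. finite (g Z) \<and> supports (set_act atom_act) (g Z) Z"
    by (rule bchoice[elim_format]) blast
  define T where "T = \<Union> (g ` F)"
  have "finite T" unfolding T_def
    by (rule finite_Union) (use Ffin g in auto)
  moreover have "supports (set_act (set_act atom_act)) T F" unfolding supports_def
  proof
    fix \<pi> assume p: "\<pi> \<in> Fix T"
    have fixZ: "\<pi> ` Z = Z" if "Z \<in> F" for Z
    proof -
      have "\<pi> \<in> Fix (g Z)" using p Fix_mono[of "g Z" T] that unfolding T_def by blast
      moreover have "supports (set_act atom_act) (g Z) Z" using g that by blast
      ultimately show ?thesis unfolding supports_def set_atom_act_eq by blast
    qed
    have "(\<lambda>Z. \<pi> ` Z) ` F = F"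
    proof
      show "(\<lambda>Z. \<pi> ` Z) ` F \<subseteq> F" using fixZ by auto
      show "F \<subseteq> (\<lambda>Z. \<pi> ` Z) ` F"
      proof
        fix Z assume "Z \<in> F"
        thus "Z \<in> (\<lambda>Z. \<pi> ` Z) ` F" using fixZ[of Z] by (metis imageI)
      qed
    qed
    thus "set_act (set_act atom_act) \<pi> F = F" by (simp only: set_act_def set_atom_act_eq)
  qed
  ultimately show "fin_supp (set_act (set_act atom_act)) F" unfolding fin_supp_def by blast
next
  fix T :: "'a set" assume T: "finite T"
  define W where "W = {Z :: 'a set. Z \<subseteq> T \<or> - Z \<subseteq> T}"
  have "{x \<in> Pfin_Pfs. supports (set_act (set_act atom_act)) T x} \<subseteq> Pow W"
  proof
    fix F assume "F \<in> {x \<in> Pfin_Pfs. supports (set_act (set_act atom_act)) T x}"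
    hence F1: "F \<in> Pfin_Pfs" and F2: "supports (set_act (set_act atom_act)) T F" by auto
    have "Z \<in> W" if Z: "Z \<in> F" for Z
    proof -
      have "small Z \<subseteq> T" by (rule PP_supp[OF inf T F1 F2 Z])
      hence "Z \<subseteq> T \<or> - Z \<subseteq> T" by (rule small_cases)
      thus ?thesis by (simp add: W_def)
    qed
    thus "F \<in> Pow W" by blast
  qed
  moreover have "finite (Pow W)" unfolding W_def using finite_or_cofinite_supp[OF T]
    by (rule finite_Pow_iff[THEN iffD2])
  ultimately show "finite {x \<in> Pfin_Pfs. supports (set_act (set_act atom_act)) T x}"
    by (rule finite_subset)
qed

theorem mainTheorem11:
  assumes "infinite (UNIV :: 'a set)"
  shows "FSM_inf_not_DI atom_act (UNIV :: 'a set)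
       \<and> FSM_inf_not_DI (set_act atom_act) (Pfs :: 'a set set)
       \<and> FSM_inf_not_DI (set_act atom_act) (Pfin :: 'a set set)
       \<and> FSM_inf_not_DI (set_act atom_act) (Pcofin :: 'a set set)
       \<and> FSM_inf_not_DI tuple_act (Tfin :: 'a list set)
       \<and> FSM_inf_not_DI fun_act (AA_fs :: ('a \<Rightarrow> 'a) set)
       \<and> FSM_inf_not_DI (set_act (set_act atom_act)) (Pfin_Pfs :: 'a set set set)"
  using atoms_ok[OF assms] Pfs_ok[OF assms] Tfin_ok[OF assms] AA_ok[OF assms] PP_ok[OF assms]
  by blast

end
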